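(* (1) For any $\mu,\lambda\in(0,1)$: $\mathbb{L}^{>0}(\mathrm{QBA}|\mathrm{ND})\subseteq\mathbb{L}^{>\mu}(\mathrm{QBA}|\mathrm{ND})=\mathbb{L}^{>\lambda}(\mathrm{QBA}|\mathrm{ND})$. (2) For any $\mu,\lambda\in(0,1)$: $\mathbb{L}^{=1}(\mathrm{QBA}|\mathrm{ND})\subseteq\mathbb{L}^{\ge\mu}(\mathrm{QBA}|\mathrm{ND})=\mathbb{L}^{\ge\lambda}(\mathrm{QBA}|\mathrm{ND})$. (3) For any $\lambda\in[0,1)$: $\mathbb{L}^{=1}(\mathrm{QBA}|\mathrm{ND})\not\subseteq\mathbb{L}^{>\lambda}(\mathrm{QBA}|\mathrm{ND})$.
   Context: A quantum automaton is a tuple $\mathcal{A}=(\mathcal{H},|s_0\rangle,\Sigma,\{U_\sigma:\sigma\in\Sigma\},F)$ where $\mathcal{H}$ is a finite-dimensional complex Hilbert space, $|s_0\rangle$ a unit vector, $\Sigma$ a finite alphabet, each $U_\sigma$ unitary, and $F$ a subspace. For $w\in\Sigma^\omega$ with length-$n$ prefixes $w_n$, the non-disturbing run is $|s_n\rangle=U_{w_n}|s_0\rangle$ where $U_{\sigma_1\cdots\sigma_m}=U_{\sigma_m}\cdots U_{\sigma_1}$, and $f^{\mathrm{ND}}_{\mathcal{A}}(w)=\sup_{|\psi\rangle\in F,\||\psi\rangle\|=1}\sup_{\{n_i\}}\inf_{i\ge1}|\langle\psi|s_{n_i}\rangle|^2$ over strictly increasing sequences $0\le n_1<n_2<\cdots$.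 Languages: $\mathcal{L}^{>0}(\mathcal{A}|\mathrm{ND})=\{w: f^{\mathrm{ND}}_{\mathcal{A}}(w)>0\}$, $\mathcal{L}^{=1}(\mathcal{A}|\mathrm{ND})=\{w:f^{\mathrm{ND}}_{\mathcal{A}}(w)=1\}$, $\mathcal{L}^{>\lambda}(\mathcal{A}|\mathrm{ND})=\{w:f^{\mathrm{ND}}_{\mathcal{A}}(w)>\lambda\}$, $\mathcal{L}^{\ge\lambda}(\mathcal{A}|\mathrm{ND})=\{w:f^{\mathrm{ND}}_{\mathcal{A}}(w)\ge\lambda\}$ (subsets of $\Sigma^\omega$). For each such semantics $\bowtie$, $\mathbb{L}^{\bowtie}(\mathrm{QBA}|\mathrm{ND})$ is the class of all languages $\mathcal{L}^{\bowtie}(\mathcal{A}|\mathrm{ND})$ as $\mathcal{A}$ ranges over all quantum automata. *)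

theory Defs
  imports "Jordan_Normal_Form.Matrix" "Jordan_Normal_Form.Conjugate"
begin

text \<open>Quantum automata over alphabet symbols drawn from nat.  The Hilbert space is
  complex^d (carrier_vec d); the alphabet is a finite nonempty set of naturals.\<close>

record qa =
  qdim   :: nat
  qinit  :: "complex vec"
  qalph  :: "nat set"
  qU     :: "nat \<Rightarrow> complex mat"
  qF     :: "complex vec set"

definition adjoint_mat :: "complex mat \<Rightarrow> complex mat" where
  "adjoint_mat U = mat (dim_col U) (dim_row U) (\<lambda>(i,j). cnj (U $$ (j,i)))"

definition unitary_mat :: "nat \<Rightarrow> complex mat \<Rightarrow> bool" where
  "unitary_mat d U \<longleftrightarrow> U \<in> carrier_mat d d \<and> U * adjoint_mat U = 1\<^sub>m d
      \<and> adjoint_mat U * U = 1\<^sub>m d"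

definition is_subspace :: "nat \<Rightarrow> complex vec set \<Rightarrow> bool" where
  "is_subspace d F \<longleftrightarrow> F \<subseteq> carrier_vec d \<and> 0\<^sub>v d \<in> F
      \<and> (\<forall>u\<in>F. \<forall>v\<in>F. u + v \<in> F) \<and> (\<forall>c. \<forall>v\<in>F. c \<cdot>\<^sub>v v \<in> F)"

definition unit_vec :: "complex vec \<Rightarrow> bool" where
  "unit_vec v \<longleftrightarrow> v \<bullet>c v = 1"

definition wf_qa :: "qa \<Rightarrow> bool" where
  "wf_qa A \<longleftrightarrow> finite (qalph A) \<and> qalph A \<noteq> {}
     \<and> qinit A \<in> carrier_vec (qdim A) \<and> unit_vec (qinit A)
     \<and> (\<forall>\<sigma>\<in>qalph A. unitary_mat (qdim A) (qU A \<sigma>))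
     \<and> is_subspace (qdim A) (qF A)"

text \<open>Non-disturbing run: s_0 = initial state, s_(n+1) = U_(w n) s_n
  (so s_n = U_(w_(n-1)) ... U_(w_0) s_0).\<close>
fun run :: "qa \<Rightarrow> (nat \<Rightarrow> nat) \<Rightarrow> nat \<Rightarrow> complex vec" where
  "run A w 0 = qinit A"
| "run A w (Suc n) = qU A (w n) *\<^sub>v run A w n"

text \<open>|<psi|s>|^2 ; note  s \<bullet>c psi = sum_i s_i * cnj(psi_i) = <psi|s>.\<close>
definition overlap :: "complex vec \<Rightarrow> complex vec \<Rightarrow> real" where
  "overlap psi s = (cmod (s \<bullet>c psi))\<^sup>2"

text \<open>f^ND. The outer supremum over unit psi in F is taken together with 0, i.e. the
  supremum of the empty set is read as 0 (only relevant when F = 0).\<close>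
definition fND :: "qa \<Rightarrow> (nat \<Rightarrow> nat) \<Rightarrow> real" where
  "fND A w = Sup (insert (0::real)
     {Inf (range (\<lambda>i::nat. overlap psi (run A w (r i)))) | (psi :: complex vec) (r :: nat \<Rightarrow> nat).
        psi \<in> qF A \<and> unit_vec psi \<and> strict_mono r})"

definition is_word :: "nat set \<Rightarrow> (nat \<Rightarrow> nat) \<Rightarrow> bool" where
  "is_word \<Sigma> w \<longleftrightarrow> (\<forall>i. w i \<in> \<Sigma>)"

text \<open>The language accepted under the threshold predicate P (e.g. (\<lambda>x. x > 0)),
  paired with its alphabet.\<close>
definition lang :: "(real \<Rightarrow> bool) \<Rightarrow> qa \<Rightarrow> nat set \<times> (nat \<Rightarrow> nat) set" where
  "lang P A = (qalph A, {w. is_word (qalph A) w \<and> P (fND A w)})"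

definition QBA_class :: "(real \<Rightarrow> bool) \<Rightarrow> (nat set \<times> (nat \<Rightarrow> nat) set) set" where
  "QBA_class P = {lang P A | A. wf_qa A}"

end

theory Submission imports Defs "HOL-Analysis.Kronecker_Approximation_Theorem" begin
hide_type (open) Finite_Cartesian_Product.vec
hide_const (open) Finite_Cartesian_Product.vec Finite_Cartesian_Product.mat Finite_Cartesian_Product.vec_nth
no_notation Finite_Cartesian_Product.vec_nth (infixl "$" 90)

lemma cprod_sum: "u \<in> carrier_vec d \<Longrightarrow> v \<bullet>c u = (\<Sum>i<d. v$i * cnj (u$i))"
  by (auto simp: scalar_prod_def lessThan_atLeast0 intro!: sum.cong)

lemma mv_sum: "U \<in> carrier_mat d d \<Longrightarrow> x \<in> carrier_vec d \<Longrightarrow> i < d \<Longrightarrow>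
   (U *\<^sub>v x) $ i = (\<Sum>j<d. U$$(i,j) * x$j)"
  by (auto simp: scalar_prod_def lessThan_atLeast0 row_def intro!: sum.cong)

lemma row_sum: "U \<in> carrier_mat d d \<Longrightarrow> x \<in> carrier_vec d \<Longrightarrow> i < d \<Longrightarrow>
   Matrix.row U i \<bullet> x = (\<Sum>j<d. U$$(i,j) * x$j)"
  by (auto simp: scalar_prod_def lessThan_atLeast0 row_def intro!: sum.cong)

lemma adj_entry: "U \<in> carrier_mat d d \<Longrightarrow> l < d \<Longrightarrow> j < d \<Longrightarrow>
   (adjoint_mat U * U) $$ (l,j) = (\<Sum>i<d. cnj (U$$(i,l)) * U$$(i,j))"
  by (auto simp: scalar_prod_def lessThan_atLeast0 row_def col_def adjoint_mat_def intro!: sum.cong)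

lemma unitary_cprod:
  assumes U: "unitary_mat d U" and x: "x \<in> carrier_vec d" and y: "y \<in> carrier_vec d"
  shows "(U *\<^sub>v x) \<bullet>c (U *\<^sub>v y) = x \<bullet>c y"
proof -
  have Uc: "U \<in> carrier_mat d d" using U unfolding unitary_mat_def by auto
  have e: "(\<Sum>i<d. cnj (U$$(i,l)) * U$$(i,j)) = (if l=j then 1 else 0)" if "l<d" "j<d" for l j
  proof -
    have "adjoint_mat U * U = 1\<^sub>m d" using U unfolding unitary_mat_def by auto
    then have "(adjoint_mat U * U) $$ (l,j) = (if l=j then 1 else 0)" using that by simp
    then show ?thesis using adj_entry[OF Uc that] by simp
  qed
  have "(U *\<^sub>v x) \<bullet>c (U *\<^sub>v y) = (\<Sum>i<d. (\<Sum>j<d. U$$(i,j) * x$j) * cnj (\<Sum>l<d. U$$(i,l) * y$l))"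
    using Uc x y by (auto simp: cprod_sum[of _ d] row_sum cnj_sum intro!: sum.cong)
  also have "\<dots> = (\<Sum>i<d. \<Sum>j<d. \<Sum>l<d. x$j * cnj (y$l) * (cnj (U$$(i,l)) * U$$(i,j)))"
    apply (simp add: sum_distrib_left sum_distrib_right cnj_sum mult_ac)
    apply (rule sum.cong[OF refl], subst sum.swap, simp add: mult_ac)
    done
  also have "\<dots> = (\<Sum>j<d. \<Sum>i<d. \<Sum>l<d. x$j * cnj (y$l) * (cnj (U$$(i,l)) * U$$(i,j)))"
    by (rule sum.swap)
  also have "\<dots> = (\<Sum>j<d. \<Sum>l<d. \<Sum>i<d. x$j * cnj (y$l) * (cnj (U$$(i,l)) * U$$(i,j)))"
    by (rule sum.cong[OF refl], rule sum.swap)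
  also have "\<dots> = (\<Sum>j<d. \<Sum>l<d. x$j * cnj (y$l) * (\<Sum>i<d. cnj (U$$(i,l)) * U$$(i,j)))"
    by (simp add: sum_distrib_left)
  also have "\<dots> = (\<Sum>j<d. \<Sum>l<d. x$j * cnj (y$l) * (if l=j then 1 else 0))"
    by (intro sum.cong refl, simp add: e)
  also have "\<dots> = (\<Sum>j<d. x$j * cnj (y$j))"
    by (simp add: if_distrib cong: if_cong)
  also have "\<dots> = x \<bullet>c y" using y by (simp add: cprod_sum)
  finally show ?thesis .
qed

lemma cprod_self: "u \<in> carrier_vec d \<Longrightarrow> u \<bullet>c u = complex_of_real (\<Sum>i<d. (cmod (u$i))^2)"
proof -
  assume u: "u \<in> carrier_vec d"
  have "u$i * cnj (u$i) = complex_of_real ((cmod (u$i))^2)" for i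
    using complex_norm_square[of "u$i"] by simp
  then show ?thesis using u by (simp add: cprod_sum of_real_sum)
qed

lemma unit_sum: "u \<in> carrier_vec d \<Longrightarrow> unit_vec u \<Longrightarrow> (\<Sum>i<d. (cmod (u$i))^2) = 1"
  using cprod_self[of u d] unfolding unit_vec_def by (metis of_real_eq_1_iff)

lemma unit_coord: "u \<in> carrier_vec d \<Longrightarrow> unit_vec u \<Longrightarrow> i < d \<Longrightarrow> cmod (u$i) \<le> 1"
proof -
  assume a: "u \<in> carrier_vec d" "unit_vec u" "i < d"
  have "(cmod (u$i))^2 \<le> (\<Sum>i<d. (cmod (u$i))^2)"
    by (rule member_le_sum) (use a in auto)
  then have "(cmod (u$i))^2 \<le> 1" using unit_sum[OF a(1,2)] by simp
  then show ?thesis by (simp add: power_le_one_iff)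
qed

lemma cprod_le1:
  assumes "u \<in> carrier_vec d" "unit_vec u" "v \<in> carrier_vec d" "unit_vec v"
  shows "cmod (v \<bullet>c u) \<le> 1"
proof -
  have "cmod (v \<bullet>c u) = cmod (\<Sum>i<d. v$i * cnj (u$i))" using assms by (simp add: cprod_sum)
  also have "\<dots> \<le> (\<Sum>i<d. cmod (v$i) * cmod (u$i))"
    by (rule order_trans[OF norm_sum]) (simp add: norm_mult)
  also have "\<dots> \<le> (\<Sum>i<d. ((cmod (v$i))^2 + (cmod (u$i))^2) / 2)"
  proof (rule sum_mono)
    fix i
    have "0 \<le> (cmod (v$i) - cmod (u$i))^2" by simp
    then show "cmod (v$i) * cmod (u$i) \<le> ((cmod (v$i))^2 + (cmod (u$i))^2) / 2"
      by (simp add: power2_diff)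
  qed
  also have "\<dots> = ((\<Sum>i<d. (cmod (v$i))^2) + (\<Sum>i<d. (cmod (u$i))^2)) / 2"
    by (simp add: sum.distrib sum_divide_distrib[symmetric])
  also have "\<dots> = 1" using assms by (simp add: unit_sum)
  finally show ?thesis .
qed

lemma overlap_bounds:
  assumes "u \<in> carrier_vec d" "unit_vec u" "v \<in> carrier_vec d" "unit_vec v"
  shows "0 \<le> overlap u v" "overlap u v \<le> 1"
  using cprod_le1[OF assms] unfolding overlap_def by (auto simp: power_le_one)

lemma run_unit:
  assumes "wf_qa A" "is_word (qalph A) w"
  shows "run A w n \<in> carrier_vec (qdim A) \<and> unit_vec (run A w n)"
proof (induction n)
  case 0 then show ?case using assms(1) by (simp add: wf_qa_def)
next
  case (Suc n)
  have U: "unitary_mat (qdim A) (qU A (w n))" using assms unfolding wf_qa_def is_word_def by auto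
  then have Uc: "qU A (w n) \<in> carrier_mat (qdim A) (qdim A)" unfolding unitary_mat_def by auto
  show ?case using Suc unitary_cprod[OF U, of "run A w n" "run A w n"] Uc
    by (auto simp: unit_vec_def)
qed

definition Sset :: "qa \<Rightarrow> (nat \<Rightarrow> nat) \<Rightarrow> real set" where
  "Sset A w = {Inf (range (\<lambda>i::nat. overlap psi (run A w (r i)))) | (psi :: complex vec) (r :: nat \<Rightarrow> nat).
        psi \<in> qF A \<and> unit_vec psi \<and> strict_mono r}"

lemma fND_Sset: "fND A w = Sup (insert 0 (Sset A w))"
  unfolding fND_def Sset_def by simp

lemma inf_bounds:
  fixes g :: "nat \<Rightarrow> real"
  assumes "\<And>i. 0 \<le> g i" "\<And>i. g i \<le> 1"
  shows "0 \<le> Inf (range g)" "Inf (range g) \<le> 1" "Inf (range g) \<le> g i"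
proof -
  have bdd: "bdd_below (range g)" using assms(1) by (intro bdd_belowI[of _ 0]) auto
  show "Inf (range g) \<le> g i" by (rule cInf_lower[OF _ bdd]) auto
  then show "Inf (range g) \<le> 1" using assms(2)[of i] by linarith
  show "0 \<le> Inf (range g)" by (rule cInf_greatest) (auto simp: assms)
qed

lemma qF_carrier: "wf_qa A \<Longrightarrow> psi \<in> qF A \<Longrightarrow> psi \<in> carrier_vec (qdim A)"
  unfolding wf_qa_def is_subspace_def by auto

lemma Sset_bounds:
  assumes "wf_qa A" "is_word (qalph A) w" "x \<in> Sset A w"
  shows "0 \<le> x" "x \<le> 1"
proof -
  obtain psi r where x: "x = Inf (range (\<lambda>i::nat. overlap psi (run A w (r i))))"
    and p: "psi \<in> qF A" "unit_vec psi" using assms(3) unfolding Sset_def by auto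
  have pc: "psi \<in> carrier_vec (qdim A)" using qF_carrier[OF assms(1) p(1)] .
  have "0 \<le> overlap psi (run A w (r i))" "overlap psi (run A w (r i)) \<le> 1" for i
    using overlap_bounds[OF pc p(2), of "run A w (r i)"] run_unit[OF assms(1,2)] by auto
  from inf_bounds[OF this] show "0 \<le> x" "x \<le> 1" unfolding x by auto
qed

lemma fND_bounds:
  assumes "wf_qa A" "is_word (qalph A) w"
  shows "0 \<le> fND A w" "fND A w \<le> 1"
proof -
  have bdd: "bdd_above (insert 0 (Sset A w))" using Sset_bounds[OF assms]
    by (intro bdd_aboveI[of _ 1]) auto
  show "0 \<le> fND A w" unfolding fND_Sset by (rule cSup_upper[OF _ bdd]) auto
  show "fND A w \<le> 1" unfolding fND_Sset by (rule cSup_least) (auto dest: Sset_bounds[OF assms])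
qed

lemma fND_ge:
  assumes "wf_qa A" "is_word (qalph A) w" "psi \<in> qF A" "unit_vec psi" "strict_mono r"
  shows "Inf (range (\<lambda>i::nat. overlap psi (run A w (r i)))) \<le> fND A w"
proof -
  have bdd: "bdd_above (insert 0 (Sset A w))" using Sset_bounds[OF assms(1,2)]
    by (intro bdd_aboveI[of _ 1]) auto
  show ?thesis unfolding fND_Sset by (rule cSup_upper[OF _ bdd]) (use assms in \<open>auto simp: Sset_def\<close>)
qed

lemma fND_gt:
  assumes "wf_qa A" "is_word (qalph A) w" "fND A w > l" "l \<ge> 0"
  obtains psi r where "psi \<in> qF A" "unit_vec psi" "strict_mono r"
     "Inf (range (\<lambda>i::nat. overlap psi (run A w (r i)))) > l"
proof -
  have bdd: "bdd_above (insert 0 (Sset A w))" using Sset_bounds[OF assms(1,2)]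
    by (intro bdd_aboveI[of _ 1]) auto
  have "\<exists>x\<in>insert 0 (Sset A w). l < x" using assms(3) unfolding fND_Sset
    using less_cSup_iff[OF _ bdd] by blast
  then obtain x where "x \<in> Sset A w" "l < x" using assms(4) by auto
  then show ?thesis using that unfolding Sset_def by auto
qed

lemma fND_leI:
  assumes "\<And>psi r. psi \<in> qF A \<Longrightarrow> unit_vec psi \<Longrightarrow> strict_mono r \<Longrightarrow>
     Inf (range (\<lambda>i::nat. overlap psi (run A w (r i)))) \<le> c" "0 \<le> c"
  shows "fND A w \<le> c"
  unfolding fND_Sset by (rule cSup_least) (use assms in \<open>auto simp: Sset_def\<close>)

lemma bw_multi:
  fixes X :: "nat \<Rightarrow> nat \<Rightarrow> complex"
  assumes "\<And>k i. i < d \<Longrightarrow> cmod (X k i) \<le> 1"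
  shows "\<exists>g. strict_mono g \<and> (\<forall>i<d. \<exists>L. (\<lambda>k. X (g k) i) \<longlonglongrightarrow> L)"
  using assms
proof (induction d)
  case 0
  show ?case by (rule exI[of _ id]) (auto simp: strict_mono_def)
next
  case (Suc d)
  then obtain g where g: "strict_mono g" "\<forall>i<d. \<exists>L. (\<lambda>k. X (g k) i) \<longlonglongrightarrow> L" by force
  have "bounded (range (\<lambda>k. X (g k) d))"
    using Suc.prems[of d] by (intro boundedI[of _ 1]) auto
  then obtain L h where h: "strict_mono h" "((\<lambda>k. X (g k) d) \<circ> h) \<longlonglongrightarrow> L"
    using bounded_imp_convergent_subsequence by blast
  have "\<forall>i<Suc d. \<exists>L. (\<lambda>k. X ((g \<circ> h) k) i) \<longlonglongrightarrow> L"
  proof (intro allI impI)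
    fix i assume "i < Suc d"
    show "\<exists>L. (\<lambda>k. X ((g \<circ> h) k) i) \<longlonglongrightarrow> L"
    proof (cases "i = d")
      case True then show ?thesis using h(2) by (auto simp: o_def)
    next
      case False
      then have "i < d" using \<open>i < Suc d\<close> by simp
      then obtain L' where "(\<lambda>k. X (g k) i) \<longlonglongrightarrow> L'" using g(2) by blast
      from LIMSEQ_subseq_LIMSEQ[OF this h(1)] show ?thesis by (auto simp: o_def)
    qed
  qed
  moreover have "strict_mono (g \<circ> h)" using g(1) h(1) by (rule strict_mono_o)
  ultimately show ?case by blast
qed

definition P :: "complex mat \<Rightarrow> nat \<Rightarrow> complex vec \<Rightarrow> complex vec" where
  "P U k = ((\<lambda>x. U *\<^sub>v x) ^^ k)"

lemma P_carrier: "unitary_mat d U \<Longrightarrow> x \<in> carrier_vec d \<Longrightarrow> P U k x \<in> carrier_vec d"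
  by (induction k) (auto simp: P_def unitary_mat_def)

lemma P_cprod: "unitary_mat d U \<Longrightarrow> x \<in> carrier_vec d \<Longrightarrow> y \<in> carrier_vec d \<Longrightarrow>
   P U k x \<bullet>c P U k y = x \<bullet>c y"
proof (induction k)
  case 0 then show ?case by (simp add: P_def)
next
  case (Suc k)
  have "P U (Suc k) x \<bullet>c P U (Suc k) y = (U *\<^sub>v P U k x) \<bullet>c (U *\<^sub>v P U k y)"
    by (simp add: P_def)
  also have "\<dots> = P U k x \<bullet>c P U k y"
    by (rule unitary_cprod) (use Suc P_carrier in auto)
  finally show ?case using Suc by simp
qed

lemma P_unit: "unitary_mat d U \<Longrightarrow> x \<in> carrier_vec d \<Longrightarrow> unit_vec x \<Longrightarrow> unit_vec (P U k x)"
  using P_cprod[of d U x x k] unfolding unit_vec_def by simp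

lemma P_add: "P U (a + b) x = P U a (P U b x)"
  by (simp add: P_def funpow_add)

lemma recurrence:
  assumes U: "unitary_mat d U" and v: "v \<in> carrier_vec d" "unit_vec v"
    and p: "psi \<in> carrier_vec d" "unit_vec psi" and e: "e > 0"
  shows "\<exists>k > N. cmod (P U k v \<bullet>c psi - v \<bullet>c psi) < e"
proof -
  define X where "X k i = P U k v $ i" for k i
  have "cmod (X k i) \<le> 1" if "i < d" for k i
    unfolding X_def using unit_coord[OF P_carrier[OF U v(1), of k] P_unit[OF U v, of k] that] .
  then obtain g where g: "strict_mono g" "\<forall>i<d. \<exists>L. (\<lambda>k. X (g k) i) \<longlonglongrightarrow> L"
    using bw_multi[of d X] by blast
  then obtain L where L: "\<forall>i<d. (\<lambda>k. X (g k) i) \<longlonglongrightarrow> L i" by metis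
  define de where "de = e / (2 * (real d + 1))"
  have de: "de > 0" using e by (simp add: de_def)
  have "\<forall>i\<in>{..<d}. \<forall>\<^sub>F k in sequentially. dist (X (g k) i) (L i) < de"
    using L de by (auto intro: tendstoD)
  then have "\<forall>\<^sub>F k in sequentially. \<forall>i\<in>{..<d}. dist (X (g k) i) (L i) < de"
    by (intro eventually_ball_finite) auto
  then obtain M where M: "\<And>k i. k \<ge> M \<Longrightarrow> i < d \<Longrightarrow> dist (X (g k) i) (L i) < de"
    unfolding eventually_sequentially by auto
  define b where "b = g M + N + 1"
  have "b \<ge> M" using seq_suble[OF g(1), of M] by (simp add: b_def)
  have gb: "g b \<ge> b" using seq_suble[OF g(1)] .
  define m where "m = g b - g M"
  have m: "m > N" "g b = g M + m" using gb by (auto simp: m_def b_def)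
  have close: "cmod (X (g b) i - X (g M) i) < 2 * de" if "i < d" for i
  proof -
    have "dist (X (g b) i) (L i) < de" "dist (X (g M) i) (L i) < de"
      using M[OF \<open>b \<ge> M\<close> that] M[OF order_refl that] by auto
    then show ?thesis by (smt (verit, best) dist_commute dist_norm dist_triangle)
  qed
  define q where "q = P U (g M) psi"
  have qc: "q \<in> carrier_vec d" and qu: "unit_vec q" using P_carrier[OF U p(1)] P_unit[OF U p] by (auto simp: q_def)
  have eq1: "P U m v \<bullet>c psi = P U (g b) v \<bullet>c q"
    unfolding q_def m(2) P_add by (rule P_cprod[symmetric]) (use U v p P_carrier in auto)
  have eq2: "v \<bullet>c psi = P U (g M) v \<bullet>c q"
    unfolding q_def by (rule P_cprod[symmetric]) (use U v p in auto)
  have "P U m v \<bullet>c psi - v \<bullet>c psi = (\<Sum>i<d. (X (g b) i - X (g M) i) * cnj (q$i))"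
    unfolding eq1 eq2 using qc by (simp add: cprod_sum X_def sum_subtractf algebra_simps)
  also have "cmod \<dots> \<le> (\<Sum>i<d. cmod (X (g b) i - X (g M) i) * cmod (q$i))"
    by (rule order_trans[OF norm_sum]) (simp add: norm_mult)
  also have "\<dots> \<le> (\<Sum>i<d. 2 * de)"
  proof (rule sum_mono)
    fix i assume "i \<in> {..<d}"
    then have "cmod (X (g b) i - X (g M) i) \<le> 2 * de" "cmod (q$i) \<le> 1"
      using close[of i] unit_coord[OF qc qu, of i] by auto
    then show "cmod (X (g b) i - X (g M) i) * cmod (q$i) \<le> 2 * de"
      by (metis mult_le_one mult.commute mult_left_le norm_ge_zero order_trans)
  qed
  also have "\<dots> = real d * 2 * de" by simp
  also have "\<dots> < e" using e by (simp add: de_def field_simps)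
  finally show ?thesis using m(1) by blast
qed

lemma run_tail:
  assumes "\<forall>j\<ge>m. w j = b"
  shows "run B w (m + k) = P (qU B b) k (run B w m)"
proof (induction k)
  case 0 then show ?case by (simp add: P_def)
next
  case (Suc k)
  have "run B w (m + Suc k) = qU B (w (m + k)) *\<^sub>v run B w (m + k)" by simp
  also have "\<dots> = qU B b *\<^sub>v P (qU B b) k (run B w m)" using assms Suc by simp
  also have "\<dots> = P (qU B b) (Suc k) (run B w m)" by (simp add: P_def)
  finally show ?case .
qed

lemma sq_close:
  fixes a b e :: real
  assumes "0 \<le> a" "a \<le> 1" "0 \<le> b" "b \<le> 1" "\<bar>a - b\<bar> < e"
  shows "b^2 - 2 * e < a^2"
proof -
  have "b^2 - a^2 = (b - a) * (b + a)" by (simp add: power2_eq_square algebra_simps)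
  also have "\<dots> \<le> \<bar>b - a\<bar> * (b + a)" using assms by (intro mult_right_mono) auto
  also have "\<dots> \<le> \<bar>b - a\<bar> * 2" using assms by (intro mult_left_mono) auto
  also have "\<dots> < e * 2" using assms by auto
  finally show ?thesis by simp
qed

lemma tail_lower:
  assumes B: "wf_qa B" "is_word (qalph B) w" and b: "b \<in> qalph B" and tail: "\<forall>j\<ge>m. w j = b"
    and p: "psi \<in> qF B" "unit_vec psi" and e: "e > 0"
  shows "overlap psi (run B w m) - e \<le> fND B w"
proof -
  define U where "U = qU B b"
  define v where "v = run B w m"
  define d where "d = qdim B"
  have U: "unitary_mat d U" using B b unfolding U_def d_def wf_qa_def by auto
  have v: "v \<in> carrier_vec d" "unit_vec v" using run_unit[OF B] unfolding v_def d_def by auto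
  have pc: "psi \<in> carrier_vec d" using qF_carrier[OF B(1) p(1)] unfolding d_def .
  have K: "\<exists>k>N. overlap psi v - e < overlap psi (P U k v)" for N
  proof -
    obtain k where k: "k > N" "cmod (P U k v \<bullet>c psi - v \<bullet>c psi) < e/2"
      using recurrence[OF U v pc p(2), of "e/2" N] e by auto
    have "\<bar>cmod (P U k v \<bullet>c psi) - cmod (v \<bullet>c psi)\<bar> < e/2"
      using k(2) norm_triangle_ineq3 order_le_less_trans by blast
    moreover have "cmod (P U k v \<bullet>c psi) \<le> 1" "cmod (v \<bullet>c psi) \<le> 1"
      using cprod_le1[OF pc p(2) P_carrier[OF U v(1)] P_unit[OF U v]] cprod_le1[OF pc p(2) v] by auto
    ultimately have "(cmod (v \<bullet>c psi))^2 - 2 * (e/2) < (cmod (P U k v \<bullet>c psi))^2"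
      by (intro sq_close) auto
    then show ?thesis using k(1) unfolding overlap_def by auto
  qed
  define K where "K N = (SOME k. k > N \<and> overlap psi v - e < overlap psi (P U k v))" for N
  have KK: "K N > N" "overlap psi v - e < overlap psi (P U (K N) v)" for N
    using someI_ex[OF K[of N]] unfolding K_def by auto
  define s where "s i = rec_nat (K 0) (\<lambda>_ x. K x) i" for i
  have s: "s 0 = K 0" "s (Suc i) = K (s i)" for i by (simp_all add: s_def)
  define r where "r i = m + s i" for i
  have "strict_mono s" unfolding strict_mono_Suc_iff using s KK by auto
  then have r: "strict_mono r" unfolding r_def strict_mono_def by auto
  have vals: "overlap psi v - e < overlap psi (run B w (r i))" for i
  proof -
    have "run B w (r i) = P U (s i) v" unfolding r_def U_def v_def by (rule run_tail[OF tail])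
    moreover have "overlap psi v - e < overlap psi (P U (s i) v)"
      by (cases i) (simp_all add: s KK)
    ultimately show ?thesis by simp
  qed
  have "overlap psi v - e \<le> Inf (range (\<lambda>i. overlap psi (run B w (r i))))"
    by (rule cInf_greatest) (auto intro: less_imp_le vals)
  also have "\<dots> \<le> fND B w" by (rule fND_ge[OF B p r])
  finally show ?thesis unfolding v_def .
qed

section \<open>The witness automaton for part 3\<close>

definition th :: real where "th = sqrt 2"

lemma th_irr: "th \<notin> \<rat>"
proof
  assume "th \<in> \<rat>"
  then obtain m n :: nat where n: "n \<noteq> 0" and sq: "\<bar>th\<bar> = m / n" and cop: "coprime m n"
    by (rule Rats_abs_nat_div_natE)
  have eq: "m^2 = 2 * n^2"
  proof -
    from n sq have "real m = \<bar>th\<bar> * n" by simp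
    then have "real (m^2) = (sqrt 2)^2 * real (n^2)" by (simp add: th_def power_mult_distrib)
    then show ?thesis by (simp del: of_nat_power add: of_nat_power[symmetric])
  qed
  then have "even (m^2)" by simp
  then have "even m" by simp
  then obtain k where "m = 2 * k" by blast
  with eq have "n^2 = 2 * k^2" by (simp add: power2_eq_square)
  then have "even n" by (metis dvd_triv_left even_power pos2)
  with \<open>even m\<close> cop show False by auto
qed

definition h2 :: complex where "h2 = complex_of_real (1 / sqrt 2)"

lemma h2_sq: "h2 * cnj h2 = 1/2" "h2 * h2 = 1/2" "cnj h2 = h2"
proof -
  have r: "(1/sqrt 2) * (1/sqrt 2) = (1/2::real)" by (simp add: divide_simps)
  show c: "cnj h2 = h2" by (simp add: h2_def)
  show "h2 * h2 = 1/2" unfolding h2_def of_real_mult[symmetric] r by simp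
  then show "h2 * cnj h2 = 1/2" using c by simp
qed

definition U0 :: "complex mat" where
  "U0 = mat 2 2 (\<lambda>(i,j). if i = j then (if i = 0 then 1 else cis (2*pi*th)) else 0)"

definition A0 :: qa where
  "A0 = \<lparr>qdim = 2, qinit = vec 2 (\<lambda>i. if i = 0 then h2 else - h2), qalph = {0,1},
         qU = (\<lambda>\<sigma>. if \<sigma> = 0 then U0 else 1\<^sub>m 2), qF = {v \<in> carrier_vec 2. v$0 = v$1}\<rparr>"

lemma sum2: "(\<Sum>i<2. f i) = f 0 + f (1::nat)"
  by (simp add: numeral_2_eq_2)

lemma unitary_one: "unitary_mat d (1\<^sub>m d)"
proof -
  have "adjoint_mat (1\<^sub>m d) = 1\<^sub>m d" by (auto simp: adjoint_mat_def)
  then show ?thesis by (simp add: unitary_mat_def)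
qed

lemma unitary_U0: "unitary_mat 2 U0"
proof -
  have c: "cis a * cnj (cis a) = 1" "cnj (cis a) * cis a = 1" for a
    by (simp_all add: cis_cnj cis_mult)
  have "U0 * adjoint_mat U0 = 1\<^sub>m 2" "adjoint_mat U0 * U0 = 1\<^sub>m 2"
    by (auto intro!: eq_matI simp: U0_def adjoint_mat_def scalar_prod_def sum2 lessThan_atLeast0[symmetric] less_2_cases_iff c)
  then show ?thesis by (simp add: unitary_mat_def U0_def)
qed

lemma wf_A0: "wf_qa A0"
proof -
  have "vec 2 (\<lambda>i. if i = 0 then h2 else - h2) \<bullet>c vec 2 (\<lambda>i. if i = 0 then h2 else - h2) = 1"
    by (simp add: cprod_sum[of _ 2] sum2 h2_sq)
  moreover have "is_subspace 2 {v \<in> carrier_vec 2. v$0 = v$1}"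
    by (auto simp: is_subspace_def)
  ultimately show ?thesis
    by (auto simp: wf_qa_def A0_def unit_vec_def unitary_U0 unitary_one)
qed

fun cnt :: "(nat \<Rightarrow> nat) \<Rightarrow> nat \<Rightarrow> nat" where
  "cnt w 0 = 0"
| "cnt w (Suc n) = cnt w n + (if w n = 0 then 1 else 0)"

lemma run_A0: "run A0 w n = vec 2 (\<lambda>i. if i = 0 then h2 else - h2 * cis (2*pi*th*cnt w n))"
proof (induction n)
  case 0 then show ?case by (auto simp: A0_def)
next
  case (Suc n)
  show ?case
  proof (cases "w n = 0")
    case True
    have "cis (2*pi*th) * cis (2*pi*th*cnt w n) = cis (2*pi*th*(cnt w n + 1))"
      by (simp add: cis_mult algebra_simps)
    then show ?thesis using Suc True
      by (auto intro!: eq_vecI simp: A0_def U0_def scalar_prod_def sum2 lessThan_atLeast0[symmetric] less_2_cases_iff row_def)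
  next
    case False
    have c: "cnt w (Suc n) = cnt w n" using False by simp
    have r: "run A0 w (Suc n) = run A0 w n" using False Suc by (simp add: A0_def)
    show ?thesis unfolding r c by (rule Suc)
  qed
qed

lemma ov_A0:
  assumes "psi \<in> qF A0" "unit_vec psi"
  shows "overlap psi (run A0 w n) = (1 - cos (2*pi*th*cnt w n)) / 2"
proof -
  define a where "a = psi$0"
  define ph where "ph = 2*pi*th*cnt w n"
  have pc: "psi \<in> carrier_vec 2" "psi$1 = a" "psi$0 = a" using assms(1) by (auto simp: A0_def a_def)
  have "psi \<bullet>c psi = 2 * (a * cnj a)" using pc by (simp add: cprod_sum[of _ 2] sum2)
  then have "a * cnj a = 1/2" using assms(2) by (simp add: unit_vec_def mult.commute)
  then have na: "(cmod a)^2 = 1/2"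
    by (metis complex_norm_square of_real_eq_iff of_real_divide of_real_1 of_real_numeral)
  have "run A0 w n \<bullet>c psi = h2 * cnj a * (1 - cis ph)"
    using pc by (simp add: run_A0 cprod_sum[of _ 2] sum2 ph_def algebra_simps)
  then have "overlap psi (run A0 w n) = (cmod h2)^2 * (cmod a)^2 * (cmod (1 - cis ph))^2"
    by (simp add: overlap_def norm_mult power_mult_distrib)
  also have "(cmod (1 - cis ph))^2 = 2 - 2 * cos ph"
    by (simp add: cmod_power2 power2_diff)
  also have "(cmod h2)^2 = 1/2" by (simp add: h2_def norm_divide power_divide)
  finally show ?thesis using na by (simp add: ph_def)
qed

lemma cnt_zero: "cnt (\<lambda>_. 0) n = n"
  by (induction n) auto

lemma cnt_tail: "\<forall>j\<ge>m. w j \<noteq> 0 \<Longrightarrow> n \<ge> m \<Longrightarrow> cnt w n = cnt w m"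
proof (induction n)
  case 0 then show ?case by simp
next
  case (Suc n)
  then show ?case by (cases "Suc n = m") auto
qed

lemma cos_frac: "cos (2 * pi * x) = cos (2 * pi * frac x)"
proof -
  have "2 * pi * x = 2 * pi * frac x + 2 * pi * of_int \<lfloor>x\<rfloor>" by (simp add: frac_def algebra_simps)
  then show ?thesis by (simp add: cos_add sin_int_2pin cos_int_2pin)
qed

lemma near_half:
  assumes e: "e > 0"
  shows "\<exists>n>N. cos (2 * pi * th * real n) < -1 + e"
proof -
  obtain d where d: "d > 0" "\<And>y. dist y pi < d \<Longrightarrow> dist (cos y) (cos pi) < e"
    using isCont_cos[of pi] e unfolding continuous_at_eps_delta by blast
  have irr: "real (Suc N) * th \<notin> \<rat>"
  proof
    assume "real (Suc N) * th \<in> \<rat>"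
    then have "(real (Suc N) * th) / real (Suc N) \<in> \<rat>" by (intro Rats_divide) auto
    then show False using th_irr by simp
  qed
  obtain k where k: "k > 0" "\<bar>frac (real k * (real (Suc N) * th)) - 1/2\<bar> < d / (2*pi)"
    using Kronecker_approx_1_explicit[OF irr, of "1/2" "d/(2*pi)"] d(1) by auto
  define n where "n = k * Suc N"
  have "1 * Suc N \<le> k * Suc N" using k(1) by (intro mult_le_mono1) simp
  then have nN: "n > N" unfolding n_def by simp
  define x where "x = frac (real k * (real (Suc N) * th))"
  have "th * real n = real k * (real (Suc N) * th)" by (simp add: n_def algebra_simps)
  then have c: "cos (2 * pi * th * real n) = cos (2 * pi * x)"
    unfolding x_def by (metis cos_frac mult.assoc)
  have "2 * pi * x - pi = (2 * pi) * (x - 1/2)" by (simp add: algebra_simps)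
  then have "\<bar>2 * pi * x - pi\<bar> = 2 * pi * \<bar>x - 1/2\<bar>" by (simp add: abs_mult)
  also have "\<dots> < 2 * pi * (d / (2*pi))" using k(2) unfolding x_def by (intro mult_strict_left_mono) auto
  also have "\<dots> = d" by simp
  finally have "dist (cos (2 * pi * x)) (cos pi) < e" using d(2) by (simp add: dist_real_def)
  then have "cos (2 * pi * x) < -1 + e" by (simp add: dist_real_def)
  then show ?thesis using c nN by auto
qed

lemma psi0: "vec 2 (\<lambda>_. h2) \<in> qF A0" "unit_vec (vec 2 (\<lambda>_. h2))"
  by (auto simp: A0_def unit_vec_def cprod_sum[of _ 2] sum2 h2_sq)

lemma word0: "is_word (qalph A0) (\<lambda>_. 0)" by (simp add: is_word_def A0_def)

lemma fND_A0_w0: "fND A0 (\<lambda>_. 0) = 1"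
proof -
  define psi where "psi = vec 2 (\<lambda>_::nat. h2)"
  have ge: "1 - e \<le> fND A0 (\<lambda>_. 0)" if e: "e > 0" for e
  proof -
    have K: "\<exists>n>N. 1 - e < overlap psi (run A0 (\<lambda>_. 0) n)" for N
    proof -
      obtain n where n: "n > N" "cos (2 * pi * th * real n) < -1 + 2 * e" using near_half[of "2*e" N] e by auto
      have "overlap psi (run A0 (\<lambda>_. 0) n) = (1 - cos (2*pi*th*real n))/2"
        using ov_A0[OF psi0[folded psi_def]] cnt_zero by simp
      then show ?thesis using n by (intro exI[of _ n]) auto
    qed
    define K where "K N = (SOME n. n > N \<and> 1 - e < overlap psi (run A0 (\<lambda>_. 0) n))" for N
    have KK: "K N > N" "1 - e < overlap psi (run A0 (\<lambda>_. 0) (K N))" for N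
      using someI_ex[OF K[of N]] unfolding K_def by auto
    define r where "r i = rec_nat (K 0) (\<lambda>_ x. K x) i" for i
    have rr: "r 0 = K 0" "r (Suc i) = K (r i)" for i by (simp_all add: r_def)
    have r: "strict_mono r" unfolding strict_mono_Suc_iff using rr KK by auto
    have vals: "1 - e < overlap psi (run A0 (\<lambda>_. 0) (r i))" for i
      by (cases i) (simp_all add: rr KK)
    have "1 - e \<le> Inf (range (\<lambda>i. overlap psi (run A0 (\<lambda>_. 0) (r i))))"
      by (rule cInf_greatest) (auto intro: less_imp_le vals)
    also have "\<dots> \<le> fND A0 (\<lambda>_. 0)" by (rule fND_ge[OF wf_A0 word0 psi0[folded psi_def] r])
    finally show ?thesis .
  qed
  have "1 \<le> fND A0 (\<lambda>_. 0)"
  proof (rule ccontr)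
    assume "\<not> 1 \<le> fND A0 (\<lambda>_. 0)"
    then have "(1 - fND A0 (\<lambda>_. 0)) / 2 > 0" by simp
    from ge[OF this] show False using \<open>\<not> 1 \<le> fND A0 (\<lambda>_. 0)\<close> by (simp add: field_simps)
  qed
  then show ?thesis using fND_bounds[OF wf_A0 word0] by auto
qed

lemma fND_A0_tail:
  assumes "\<forall>j\<ge>m. w j = 1"
  shows "fND A0 w < 1"
proof -
  define c where "c = (1 - cos (2 * pi * th * real (cnt w m))) / 2"
  have "cos (2 * pi * th * real (cnt w m)) \<noteq> -1"
  proof
    assume "cos (2 * pi * th * real (cnt w m)) = -1"
    then obtain x :: int where x: "2 * pi * th * real (cnt w m) = (2 * real_of_int x + 1) * pi"
      unfolding cos_eq_minus1 by blast
    then have "pi * (2 * th * real (cnt w m)) = pi * (2 * real_of_int x + 1)" by (simp add: algebra_simps)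
    then have x2: "2 * th * real (cnt w m) = 2 * real_of_int x + 1" using pi_gt_zero by simp
    show False
    proof (cases "cnt w m = 0")
      case True
      then have "real_of_int (2 * x + 1) = 0" using x2 by simp
      then have "2 * x + 1 = 0" by linarith
      then show False by presburger
    next
      case False
      then have "th = (2 * real_of_int x + 1) / (2 * real (cnt w m))" using x2 by (simp add: field_simps)
      moreover have "(2 * real_of_int x + 1) / (2 * real (cnt w m)) \<in> \<rat>" by simp
      ultimately show False using th_irr by simp
    qed
  qed
  moreover have "cos (2 * pi * th * real (cnt w m)) \<ge> -1" by simp
  ultimately have "-1 < cos (2 * pi * th * real (cnt w m))" by (auto simp: less_le)
  then have c1: "c < 1" unfolding c_def by simp
  have c0: "0 \<le> c" unfolding c_def by simp
  have "fND A0 w \<le> c"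
  proof (rule fND_leI[OF _ c0])
    fix psi and r :: "nat \<Rightarrow> nat" assume p: "psi \<in> qF A0" "unit_vec psi" and r: "strict_mono r"
    have g: "0 \<le> overlap psi (run A0 w (r i)) \<and> overlap psi (run A0 w (r i)) \<le> 1" for i
      unfolding ov_A0[OF p] by auto
    have "Inf (range (\<lambda>i. overlap psi (run A0 w (r i)))) \<le> overlap psi (run A0 w (r m))"
      using g by (intro inf_bounds(3)) auto
    also have "\<dots> = c"
      using ov_A0[OF p] cnt_tail[of m w "r m"] assms seq_suble[OF r, of m] unfolding c_def by auto
    finally show "Inf (range (\<lambda>i. overlap psi (run A0 w (r i)))) \<le> c" .
  qed
  then show ?thesis using c1 by simp
qed

lemma run_prefix: "(\<forall>j<m. w j = v j) \<Longrightarrow> n \<le> m \<Longrightarrow> run B w n = run B v n"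
  by (induction n) auto

lemma part3:
  assumes l: "0 \<le> l"
  shows "\<not> QBA_class (\<lambda>x. x = 1) \<subseteq> QBA_class (\<lambda>x. x > l)"
proof
  assume sub: "QBA_class (\<lambda>x. x = 1) \<subseteq> QBA_class (\<lambda>x. x > l)"
  have "lang (\<lambda>x. x = 1) A0 \<in> QBA_class (\<lambda>x. x = 1)" using wf_A0 unfolding QBA_class_def by blast
  with sub have "lang (\<lambda>x. x = 1) A0 \<in> QBA_class (\<lambda>x. x > l)" by (rule subsetD)
  then have "\<exists>B. lang (\<lambda>x. x = 1) A0 = lang (\<lambda>x. x > l) B \<and> wf_qa B"
    unfolding QBA_class_def mem_Collect_eq by (simp only: eq_commute)
  then obtain B where B: "wf_qa B" and eq: "lang (\<lambda>x. x > l) B = lang (\<lambda>x. x = 1) A0"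
    by metis
  have a0: "qalph A0 = {0,1}" by (simp add: A0_def)
  have alph: "qalph B = {0,1}" using arg_cong[OF eq, of fst] a0 unfolding lang_def by simp
  have sets: "{w. is_word {0,1} w \<and> fND B w > l} = {w. is_word {0,1} w \<and> fND A0 w = 1}"
    using arg_cong[OF eq, of snd] unfolding lang_def by (simp only: a0 alph snd_conv)
  define w0 :: "nat \<Rightarrow> nat" where "w0 = (\<lambda>_. 0)"
  have w0w: "is_word {0,1} w0" by (simp add: is_word_def w0_def)
  have "w0 \<in> {w. is_word {0,1} w \<and> fND A0 w = 1}" using w0w fND_A0_w0 by (simp add: w0_def)
  then have "w0 \<in> {w. is_word {0,1} w \<and> fND B w > l}" unfolding sets .
  then have gt: "fND B w0 > l" by simp
  have w0B: "is_word (qalph B) w0" using w0w alph by simp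
  obtain psi r where p: "psi \<in> qF B" "unit_vec psi" and r: "strict_mono r"
    and inf: "Inf (range (\<lambda>i::nat. overlap psi (run B w0 (r i)))) > l"
    by (rule fND_gt[OF B w0B gt l])
  have pc: "psi \<in> carrier_vec (qdim B)" using qF_carrier[OF B p(1)] .
  have bnds: "0 \<le> overlap psi (run B w0 (r i)) \<and> overlap psi (run B w0 (r i)) \<le> 1" for i
    using overlap_bounds[OF pc p(2), of "run B w0 (r i)"] run_unit[OF B w0B, of "r i"] by auto
  define m where "m = r 0"
  define ov where "ov = overlap psi (run B w0 m)"
  have "Inf (range (\<lambda>i::nat. overlap psi (run B w0 (r i)))) \<le> ov"
    unfolding ov_def m_def using bnds by (intro inf_bounds(3)) auto
  with inf have ovl: "ov > l" by simp
  define w' :: "nat \<Rightarrow> nat" where "w' = (\<lambda>j. if j < m then 0 else 1)"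
  have w'w: "is_word (qalph B) w'" using alph by (simp add: is_word_def w'_def)
  have "run B w' m = run B w0 m" by (rule run_prefix) (auto simp: w'_def w0_def)
  then have "ov - (ov - l)/2 \<le> fND B w'"
    using tail_lower[OF B w'w _ _ p, of 1 m "(ov - l)/2"] alph ovl unfolding ov_def
    by (auto simp: w'_def)
  then have "fND B w' > l" using ovl by argo
  then have "w' \<in> {w. is_word {0,1} w \<and> fND B w > l}" using w'w alph by simp
  then have "w' \<in> {w. is_word {0,1} w \<and> fND A0 w = 1}" unfolding sets .
  moreover have "fND A0 w' < 1" by (rule fND_A0_tail[of m]) (simp add: w'_def)
  ultimately show False by simp
qed

section \<open>Block constructions\<close>

definition ext :: "nat \<Rightarrow> complex \<Rightarrow> complex \<Rightarrow> complex vec \<Rightarrow> complex vec" where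
  "ext d a b v = vec (Suc d) (\<lambda>i. if i < d then a * v$i else b)"

definition blk :: "nat \<Rightarrow> complex mat \<Rightarrow> complex mat" where
  "blk d U = mat (Suc d) (Suc d) (\<lambda>(i,j). if i < d \<and> j < d then U$$(i,j) else if i = j then 1 else 0)"

definition restr :: "nat \<Rightarrow> complex vec \<Rightarrow> complex vec" where
  "restr d v = vec d (\<lambda>i. v$i)"

lemma mat_mult_sum: "A \<in> carrier_mat m n \<Longrightarrow> B \<in> carrier_mat n k \<Longrightarrow> i < m \<Longrightarrow> j < k \<Longrightarrow>
   (A * B) $$ (i,j) = (\<Sum>l<n. A$$(i,l) * B$$(l,j))"
  by (auto simp: scalar_prod_def lessThan_atLeast0 row_def col_def intro!: sum.cong)

lemma blk_carrier[simp]: "blk d U \<in> carrier_mat (Suc d) (Suc d)"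
  by (simp add: blk_def)

lemma dim_blk[simp]: "dim_row (blk d U) = Suc d" "dim_col (blk d U) = Suc d"
  by (simp_all add: blk_def)

lemma adjoint_blk: "adjoint_mat (blk d U) = blk d (adjoint_mat U)" if "U \<in> carrier_mat d d"
  using that by (auto intro!: eq_matI simp: blk_def adjoint_mat_def)

lemma blk_mult: "blk d U * blk d V = blk d (U * V)" if "U \<in> carrier_mat d d" "V \<in> carrier_mat d d"
proof (rule eq_matI)
  fix i j assume ij: "i < dim_row (blk d (U * V))" "j < dim_col (blk d (U * V))"
  then have ij': "i < Suc d" "j < Suc d" by (auto simp: blk_def)
  have "(blk d U * blk d V) $$ (i,j) = (\<Sum>l<Suc d. blk d U $$ (i,l) * blk d V $$ (l,j))"
    by (rule mat_mult_sum[OF blk_carrier blk_carrier ij'])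
  also have "\<dots> = (\<Sum>l<d. blk d U $$ (i,l) * blk d V $$ (l,j)) + blk d U $$ (i,d) * blk d V $$ (d,j)"
    by simp
  also have "\<dots> = blk d (U * V) $$ (i,j)"
  proof (cases "i < d \<and> j < d")
    case True
    then show ?thesis using that ij' by (simp add: blk_def mat_mult_sum[of U d d V d] del: index_mult_mat)
  next
    case False
    then show ?thesis using that ij' by (auto simp: blk_def if_distrib cong: if_cong)
  qed
  finally show "(blk d U * blk d V) $$ (i,j) = blk d (U * V) $$ (i,j)" .
qed (auto simp: blk_def)

lemma blk_one: "blk d (1\<^sub>m d) = 1\<^sub>m (Suc d)"
  by (auto intro!: eq_matI simp: blk_def)

lemma unitary_blk: "unitary_mat d U \<Longrightarrow> unitary_mat (Suc d) (blk d U)"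
proof -
  assume U: "unitary_mat d U"
  then have Uc: "U \<in> carrier_mat d d" and Ua: "adjoint_mat U \<in> carrier_mat d d"
    by (auto simp: unitary_mat_def adjoint_mat_def)
  show ?thesis using U unfolding unitary_mat_def
    by (simp add: adjoint_blk[OF Uc] blk_mult[OF Uc Ua] blk_mult[OF Ua Uc] blk_one)
qed

lemma blk_mv: "U \<in> carrier_mat d d \<Longrightarrow> v \<in> carrier_vec d \<Longrightarrow> blk d U *\<^sub>v ext d a b v = ext d a b (U *\<^sub>v v)"
proof (rule eq_vecI)
  fix i assume U: "U \<in> carrier_mat d d" and v: "v \<in> carrier_vec d" and i: "i < dim_vec (ext d a b (U *\<^sub>v v))"
  then have i': "i < Suc d" by (simp add: ext_def)
  have "(blk d U *\<^sub>v ext d a b v) $ i = (\<Sum>j<Suc d. blk d U $$ (i,j) * ext d a b v $ j)"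
    using i' by (simp add: row_sum[of _ "Suc d"] ext_def)
  also have "\<dots> = (\<Sum>j<d. blk d U $$ (i,j) * ext d a b v $ j) + blk d U $$ (i,d) * ext d a b v $ d"
    by simp
  also have "\<dots> = ext d a b (U *\<^sub>v v) $ i"
  proof (cases "i < d")
    case True
    then show ?thesis using U v by (simp add: blk_def ext_def row_sum[of U d] sum_distrib_left mult_ac)
  next
    case False
    then show ?thesis using i' by (simp add: blk_def ext_def)
  qed
  finally show "(blk d U *\<^sub>v ext d a b v) $ i = ext d a b (U *\<^sub>v v) $ i" .
qed (simp add: ext_def)

lemma ext_cprod:
  assumes "s \<in> carrier_vec d" "psi \<in> carrier_vec (Suc d)"
  shows "ext d a b s \<bullet>c psi = a * (s \<bullet>c restr d psi) + b * cnj (psi$d)"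
  using assms by (simp add: cprod_sum[of _ "Suc d"] cprod_sum[of _ d] ext_def restr_def sum_distrib_left mult_ac)

lemma restr_carrier[simp]: "restr d v \<in> carrier_vec d" by (simp add: restr_def)

lemma self_split:
  assumes "psi \<in> carrier_vec (Suc d)"
  shows "psi \<bullet>c psi = restr d psi \<bullet>c restr d psi + psi$d * cnj (psi$d)"
  using assms by (simp add: cprod_sum[of _ "Suc d"] cprod_sum[of _ d] restr_def)

definition mkB :: "qa \<Rightarrow> real \<Rightarrow> bool \<Rightarrow> qa" where
  "mkB A p x = \<lparr>qdim = Suc (qdim A),
     qinit = ext (qdim A) (complex_of_real (sqrt p)) (complex_of_real (sqrt (1-p))) (qinit A),
     qalph = qalph A, qU = (\<lambda>\<sigma>. blk (qdim A) (qU A \<sigma>)),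
     qF = {v \<in> carrier_vec (Suc (qdim A)). restr (qdim A) v \<in> qF A \<and> (x \<or> v$(qdim A) = 0)}\<rparr>"

lemma mkB_simps[simp]: "qdim (mkB A p x) = Suc (qdim A)" "qalph (mkB A p x) = qalph A"
  "qU (mkB A p x) = (\<lambda>\<sigma>. blk (qdim A) (qU A \<sigma>))"
  "qF (mkB A p x) = {v \<in> carrier_vec (Suc (qdim A)). restr (qdim A) v \<in> qF A \<and> (x \<or> v$(qdim A) = 0)}"
  "qinit (mkB A p x) = ext (qdim A) (complex_of_real (sqrt p)) (complex_of_real (sqrt (1-p))) (qinit A)"
  by (simp_all add: mkB_def)

lemma ext_self: "s \<in> carrier_vec d \<Longrightarrow> ext d a b s \<bullet>c ext d a b s = a * cnj a * (s \<bullet>c s) + b * cnj b"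
  by (simp add: cprod_sum[of _ "Suc d"] cprod_sum[of _ d] ext_def sum_distrib_left mult_ac)

lemma sq_of_real: "0 \<le> p \<Longrightarrow> complex_of_real (sqrt p) * cnj (complex_of_real (sqrt p)) = complex_of_real p"
  by (simp flip: of_real_mult)

lemma sq_of_real': "0 \<le> p \<Longrightarrow> complex_of_real (sqrt p) * complex_of_real (sqrt p) = complex_of_real p"
  by (simp flip: of_real_mult)

lemma ext_carrier[simp]: "ext d a b s \<in> carrier_vec (Suc d)" by (simp add: ext_def)

lemma wf_mkB:
  assumes A: "wf_qa A" and p: "0 \<le> p" "p \<le> 1"
  shows "wf_qa (mkB A p x)"
proof -
  define d where "d = qdim A"
  have s: "qinit A \<in> carrier_vec d" "qinit A \<bullet>c qinit A = 1" using A by (auto simp: wf_qa_def d_def unit_vec_def)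
  have unit: "unit_vec (qinit (mkB A p x))"
    unfolding unit_vec_def mkB_simps d_def[symmetric] ext_self[OF s(1)] s(2)
    using p by (simp add: sq_of_real' flip: of_real_add)
  have sub: "is_subspace d (qF A)" using A by (simp add: wf_qa_def d_def)
  then have sub': "0\<^sub>v d \<in> qF A" "\<And>u v. u \<in> qF A \<Longrightarrow> v \<in> qF A \<Longrightarrow> u + v \<in> qF A"
    "\<And>c v. v \<in> qF A \<Longrightarrow> c \<cdot>\<^sub>v v \<in> qF A" unfolding is_subspace_def by auto
  have r0: "restr d (0\<^sub>v (Suc d)) = 0\<^sub>v d" by (auto simp: restr_def)
  have radd: "restr d (u + v) = restr d u + restr d v" if "u \<in> carrier_vec (Suc d)" "v \<in> carrier_vec (Suc d)" for u v
    using that by (auto simp: restr_def)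
  have rsm: "restr d (c \<cdot>\<^sub>v v) = c \<cdot>\<^sub>v restr d v" if "v \<in> carrier_vec (Suc d)" for c v
    using that by (auto simp: restr_def)
  have "is_subspace (Suc d) (qF (mkB A p x))"
    unfolding is_subspace_def mkB_simps d_def[symmetric]
    using sub' by (auto simp: r0 radd rsm)
  moreover have "\<forall>\<sigma>\<in>qalph A. unitary_mat (Suc d) (blk d (qU A \<sigma>))"
    using A unitary_blk by (auto simp: wf_qa_def d_def)
  ultimately show ?thesis using A unit unfolding wf_qa_def by (simp add: d_def)
qed

lemma run_mkB:
  assumes A: "wf_qa A" and w: "is_word (qalph A) w"
  shows "run (mkB A p x) w n = ext (qdim A) (complex_of_real (sqrt p)) (complex_of_real (sqrt (1-p))) (run A w n)"
proof (induction n)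
  case 0 then show ?case by simp
next
  case (Suc n)
  have U: "qU A (w n) \<in> carrier_mat (qdim A) (qdim A)"
    using A w unfolding wf_qa_def is_word_def unitary_mat_def by auto
  show ?case using Suc blk_mv[OF U] run_unit[OF A w, of n] by simp
qed

lemma ov_mkB:
  assumes A: "wf_qa A" and w: "is_word (qalph A) w" and psi: "psi \<in> qF (mkB A p x)"
  shows "overlap psi (run (mkB A p x) w n) =
    (cmod (complex_of_real (sqrt p) * (run A w n \<bullet>c restr (qdim A) psi) + complex_of_real (sqrt (1-p)) * cnj (psi$(qdim A))))^2"
  using psi run_unit[OF A w, of n] by (simp add: overlap_def run_mkB[OF A w] ext_cprod)

lemma inf_scale_le:
  fixes g :: "nat \<Rightarrow> real"
  assumes "p > 0" "\<And>i. 0 \<le> g i"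
  shows "Inf (range (\<lambda>i. p * g i)) \<le> p * Inf (range g)"
proof -
  have bdd: "bdd_below (range (\<lambda>i. p * g i))" using assms by (intro bdd_belowI[of _ 0]) auto
  have "Inf (range (\<lambda>i. p * g i)) / p \<le> g i" for i
    using cInf_lower[OF _ bdd, of "p * g i"] assms(1) by (simp add: field_simps)
  then have "Inf (range (\<lambda>i. p * g i)) / p \<le> Inf (range g)" by (intro cInf_greatest) auto
  then show ?thesis using assms(1) by (simp add: field_simps)
qed

lemma inf_scale_ge:
  fixes g :: "nat \<Rightarrow> real"
  assumes "p \<ge> 0" "\<And>i. 0 \<le> g i"
  shows "p * Inf (range g) \<le> Inf (range (\<lambda>i. p * g i))"
proof -
  have bdd: "bdd_below (range g)" using assms by (intro bdd_belowI[of _ 0]) auto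
  have "p * Inf (range g) \<le> p * g i" for i
    using cInf_lower[OF _ bdd, of "g i"] assms(1) by (intro mult_left_mono) auto
  then show ?thesis by (intro cInf_greatest) auto
qed

lemma ov_scaled:
  assumes A: "wf_qa A" and w: "is_word (qalph A) w" and psi: "psi \<in> qF (mkB A p False)" and p: "0 \<le> p"
  shows "overlap psi (run (mkB A p False) w n) = p * overlap (restr (qdim A) psi) (run A w n)"
proof -
  have "psi$(qdim A) = 0" using psi by simp
  then show ?thesis using ov_mkB[OF A w psi, of n] p
    by (simp add: overlap_def norm_mult power_mult_distrib)
qed

lemma restr_ext: "v \<in> carrier_vec d \<Longrightarrow> restr d (ext d 1 b v) = v"
  by (auto simp: restr_def ext_def)

lemma fND_scaled:
  assumes A: "wf_qa A" and w: "is_word (qalph A) w" and p: "0 < p" "p \<le> 1"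
  shows "fND (mkB A p False) w = p * fND A w"
proof -
  define B where "B = mkB A p False"
  define d where "d = qdim A"
  have B: "wf_qa B" unfolding B_def by (rule wf_mkB[OF A]) (use p in auto)
  have wB: "is_word (qalph B) w" using w by (simp add: B_def)
  have ovb: "0 \<le> overlap phi (run A w n)" if "phi \<in> qF A" "unit_vec phi" for phi n
    using overlap_bounds(1)[OF qF_carrier[OF A that(1)] that(2)] run_unit[OF A w] by auto
  have le: "fND B w \<le> p * fND A w"
  proof (rule fND_leI)
    show "0 \<le> p * fND A w" using fND_bounds[OF A w] p by simp
    fix psi and r :: "nat \<Rightarrow> nat" assume ps: "psi \<in> qF B" "unit_vec psi" "strict_mono r"
    have pc: "psi \<in> carrier_vec (Suc d)" "psi$d = 0" "restr d psi \<in> qF A" using ps(1) by (auto simp: B_def d_def)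
    have "restr d psi \<bullet>c restr d psi = 1" using self_split[OF pc(1)] pc(2) ps(2) by (simp add: unit_vec_def)
    then have ru: "unit_vec (restr d psi)" by (simp add: unit_vec_def)
    have "(\<lambda>i. overlap psi (run B w (r i))) = (\<lambda>i. p * overlap (restr d psi) (run A w (r i)))"
      using ov_scaled[OF A w _ less_imp_le[OF p(1)]] ps(1) by (simp add: B_def d_def)
    then have "Inf (range (\<lambda>i. overlap psi (run B w (r i)))) = Inf (range (\<lambda>i. p * overlap (restr d psi) (run A w (r i))))"
      by (rule arg_cong[of _ _ "\<lambda>f. Inf (range f)"])
    also have "\<dots> \<le> p * Inf (range (\<lambda>i. overlap (restr d psi) (run A w (r i))))"
      by (rule inf_scale_le[OF p(1)]) (rule ovb[OF pc(3) ru])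
    also have "\<dots> \<le> p * fND A w"
      using fND_ge[OF A w pc(3) ru ps(3)] p by simp
    finally show "Inf (range (\<lambda>i. overlap psi (run B w (r i)))) \<le> p * fND A w" .
  qed
  have "fND A w \<le> fND B w / p"
    unfolding fND_Sset[of A w]
  proof (rule cSup_least)
    show "insert 0 (Sset A w) \<noteq> {}" by simp
  next
    fix x assume "x \<in> insert 0 (Sset A w)"
    then show "x \<le> fND B w / p"
    proof
      assume "x = 0" then show ?thesis using fND_bounds[OF B wB] p by simp
    next
      assume "x \<in> Sset A w"
      then obtain phi r where x: "x = Inf (range (\<lambda>i::nat. overlap phi (run A w (r i))))"
        and ph: "phi \<in> qF A" "unit_vec phi" "strict_mono r" unfolding Sset_def by auto
      have phc: "phi \<in> carrier_vec d" using qF_carrier[OF A ph(1)] by (simp add: d_def)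
      define psi where "psi = ext d 1 0 phi"
      have rp: "restr d psi = phi" using restr_ext[OF phc] by (simp add: psi_def)
      have psiF: "psi \<in> qF B" using rp ph(1) by (simp add: B_def d_def psi_def ext_def)
      have "psi \<bullet>c psi = 1" using self_split[of psi d] rp ph(2) by (simp add: psi_def unit_vec_def ext_def)
      then have pu: "unit_vec psi" by (simp add: unit_vec_def)
      have "(\<lambda>i. overlap psi (run B w (r i))) = (\<lambda>i. p * overlap phi (run A w (r i)))"
        using ov_scaled[OF A w _ less_imp_le[OF p(1)]] psiF rp by (simp add: B_def d_def)
      then have eqI: "Inf (range (\<lambda>i. overlap psi (run B w (r i)))) = Inf (range (\<lambda>i. p * overlap phi (run A w (r i))))"
        by (rule arg_cong[of _ _ "\<lambda>f. Inf (range f)"])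
      have "p * x \<le> Inf (range (\<lambda>i. overlap psi (run B w (r i))))"
        unfolding x eqI using p ovb[OF ph(1,2)] by (intro inf_scale_ge) auto
      also have "\<dots> \<le> fND B w" by (rule fND_ge[OF B wB psiF pu ph(3)])
      finally show ?thesis using p by (simp add: field_simps)
    qed
  qed
  then have "p * fND A w \<le> fND B w" using p by (simp add: field_simps)
  then show ?thesis using le unfolding B_def by simp
qed

lemma cprod_smult_right: "w \<in> carrier_vec d \<Longrightarrow> v \<bullet>c (c \<cdot>\<^sub>v w) = cnj c * (v \<bullet>c w)"
  by (simp add: cprod_sum[of _ d] sum_distrib_left mult_ac)

lemma cprod_smult_left: "w \<in> carrier_vec d \<Longrightarrow> v \<in> carrier_vec d \<Longrightarrow> (c \<cdot>\<^sub>v v) \<bullet>c w = c * (v \<bullet>c w)"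
  by (simp add: cprod_sum[of _ d] sum_distrib_left mult_ac)

lemma ov_bnds_B:
  assumes B: "wf_qa B" "is_word (qalph B) w" and p: "psi \<in> qF B" "unit_vec psi"
  shows "0 \<le> overlap psi (run B w n) \<and> overlap psi (run B w n) \<le> 1"
  using overlap_bounds[OF qF_carrier[OF B(1) p(1)] p(2)] run_unit[OF B, of n] by auto

lemma shift_lower:
  fixes r :: "nat \<Rightarrow> nat"
  assumes A: "wf_qa A" and w: "is_word (qalph A) w" and p: "0 < p" "p < 1"
    and ph: "phi \<in> qF A" "unit_vec phi" and r: "strict_mono r"
  shows "p * Inf (range (\<lambda>i. overlap phi (run A w (r i)))) + (1 - p) \<le> fND (mkB A p True) w"
proof -
  define B where "B = mkB A p True"
  define d where "d = qdim A"
  define q where "q = 1 - p"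
  have q: "q > 0" using p by (simp add: q_def)
  have B: "wf_qa B" unfolding B_def by (rule wf_mkB[OF A]) (use p in auto)
  have wB: "is_word (qalph B) w" using w by (simp add: B_def)
  have phc: "phi \<in> carrier_vec d" using qF_carrier[OF A ph(1)] by (simp add: d_def)
  define t where "t = Inf (range (\<lambda>i. overlap phi (run A w (r i))))"
  define X where "X i = run A w (r i) \<bullet>c phi" for i
  have X1: "cmod (X i) \<le> 1" for i
    unfolding X_def using cprod_le1[OF phc ph(2), of "run A w (r i)"] run_unit[OF A w] by (simp add: d_def)
  have ovX: "overlap phi (run A w (r i)) = (cmod (X i))^2" for i by (simp add: overlap_def X_def)
  have ob: "0 \<le> overlap phi (run A w n) \<and> overlap phi (run A w n) \<le> 1" for n
    using overlap_bounds[OF phc ph(2), of "run A w n"] run_unit[OF A w, of n] by (auto simp: d_def)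
  have tX: "t \<le> (cmod (X i))^2" for i
    unfolding t_def ovX[symmetric]
    by (rule inf_bounds(3)) (use ob in auto)
  have "bounded (range X)" using X1 by (intro boundedI[of _ 1]) auto
  then obtain z h where h: "strict_mono h" "(X \<circ> h) \<longlonglongrightarrow> z"
    using bounded_imp_convergent_subsequence by blast
  have "(\<lambda>k. (cmod (X (h k)))^2) \<longlonglongrightarrow> (cmod z)^2"
    using h(2) by (intro tendsto_intros) (simp add: o_def)
  then have tz: "t \<le> (cmod z)^2" by (rule LIMSEQ_le_const) (use tX in auto)
  define N where "N = p * (cmod z)^2 + q"
  have N: "N > 0" using p q by (simp add: N_def add_nonneg_pos)
  define sN where "sN = sqrt N"
  have sN: "sN > 0" "sN * sN = N" using N by (auto simp: sN_def)
  define a where "a = complex_of_real (sqrt p)"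
  define b where "b = complex_of_real (sqrt q)"
  define c where "c = a * z / complex_of_real sN"
  define be where "be = complex_of_real (sqrt q / sN)"
  define psi where "psi = vec (Suc d) (\<lambda>i. if i < d then c * phi$i else be)"
  have psic: "psi \<in> carrier_vec (Suc d)" by (simp add: psi_def)
  have rpsi: "restr d psi = c \<cdot>\<^sub>v phi" using phc by (auto simp: psi_def restr_def)
  have psid: "psi $ d = be" by (simp add: psi_def)
  have sub: "is_subspace d (qF A)" using A by (simp add: wf_qa_def d_def)
  have "c \<cdot>\<^sub>v phi \<in> qF A" using sub ph(1) unfolding is_subspace_def by auto
  then have psiF: "psi \<in> qF B" using psic rpsi by (simp add: B_def d_def)
  have aa: "a * cnj a = complex_of_real p" using p by (simp add: a_def sq_of_real')
  have bb: "b * cnj b = complex_of_real q" using q by (simp add: b_def sq_of_real')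
  have zz: "z * cnj z = complex_of_real ((cmod z)^2)" using complex_norm_square[of z] by simp
  have sNc: "complex_of_real sN * complex_of_real sN = complex_of_real N" using sN by (simp flip: of_real_mult)
  have "psi \<bullet>c psi = (c \<cdot>\<^sub>v phi) \<bullet>c (c \<cdot>\<^sub>v phi) + be * cnj be"
    using self_split[OF psic] rpsi psid by simp
  also have "\<dots> = c * cnj c + be * cnj be"
    using phc ph(2) by (simp add: cprod_smult_left[of _ d] cprod_smult_right[of _ d] unit_vec_def)
  also have "\<dots> = (a * cnj a * (z * cnj z) + b * cnj b) / (complex_of_real sN * complex_of_real sN)"
    using sN N q by (simp add: c_def be_def b_def field_simps flip: of_real_mult)
  also have "\<dots> = 1"
  proof -
    have e: "complex_of_real p * complex_of_real ((cmod z)^2) + complex_of_real q = complex_of_real N"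
      by (simp add: N_def)
    have "complex_of_real N \<noteq> 0" using N by simp
    then show ?thesis unfolding aa bb zz sNc e by simp
  qed
  finally have pu: "unit_vec psi" by (simp add: unit_vec_def)
  define G where "G y = (cmod (complex_of_real p * cnj z * y + complex_of_real q))^2 / N" for y
  have ovG: "overlap psi (run B w n) = G (run A w n \<bullet>c phi)" for n
  proof -
    have "overlap psi (run B w n) = (cmod (a * (run A w n \<bullet>c (c \<cdot>\<^sub>v phi)) + b * cnj be))^2"
      using ov_mkB[OF A w psiF[unfolded B_def], of n] rpsi psid by (simp add: B_def d_def a_def b_def q_def)
    also have "a * (run A w n \<bullet>c (c \<cdot>\<^sub>v phi)) + b * cnj be
       = (complex_of_real p * cnj z * (run A w n \<bullet>c phi) + complex_of_real q) / complex_of_real sN"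
    proof -
      have ac: "a * cnj c = (a * a) * cnj z / complex_of_real sN" by (simp add: c_def a_def)
      have aa': "a * a = complex_of_real p" using p by (simp add: a_def sq_of_real')
      have "sqrt q * (sqrt q / sN) = q / sN" using q by (simp add: real_sqrt_mult_self)
      then have bc: "b * cnj be = complex_of_real q / complex_of_real sN"
        by (simp add: b_def be_def flip: of_real_mult of_real_divide)
      have "a * (run A w n \<bullet>c (c \<cdot>\<^sub>v phi)) + b * cnj be = a * cnj c * (run A w n \<bullet>c phi) + b * cnj be"
        using phc by (simp add: cprod_smult_right[of _ d])
      also have "\<dots> = (complex_of_real p * cnj z * (run A w n \<bullet>c phi) + complex_of_real q) / complex_of_real sN"
        unfolding ac aa' bc by (simp add: add_divide_distrib)
      finally show ?thesis .
    qed
    also have "(cmod \<dots>)^2 = G (run A w n \<bullet>c phi)"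
      using sN by (simp add: G_def norm_divide power_divide power2_eq_square flip: sN(2))
    finally show ?thesis .
  qed
  have "(\<lambda>k. G (X (h k))) \<longlonglongrightarrow> G z"
    unfolding G_def using h(2) N by (intro tendsto_intros) (auto simp: o_def)
  moreover have "G z = N"
  proof -
    have "complex_of_real p * cnj z * z + complex_of_real q = complex_of_real N"
    proof -
      have "complex_of_real p * cnj z * z = complex_of_real p * (z * cnj z)" by (simp add: mult_ac)
      also have "\<dots> = complex_of_real (p * (cmod z)^2)" unfolding zz by simp
      finally show ?thesis by (simp add: N_def)
    qed
    then show ?thesis using N by (simp add: G_def power2_eq_square)
  qed
  ultimately have GN: "(\<lambda>k. G (X (h k))) \<longlonglongrightarrow> N" by simp
  have main: "N - e \<le> fND B w" if e: "e > 0" for e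
  proof -
    obtain K where K: "\<And>k. k \<ge> K \<Longrightarrow> dist (G (X (h k))) N < e"
      using GN e unfolding LIMSEQ_def by blast
    define r' where "r' k = r (h (k + K))" for k
    have r': "strict_mono r'" unfolding r'_def strict_mono_def
      using r h(1) by (simp add: strict_mono_less)
    have "N - e \<le> overlap psi (run B w (r' k))" for k
    proof -
      have "dist (G (X (h (k + K)))) N < e" by (rule K) simp
      then show ?thesis unfolding ovG r'_def X_def by (simp add: dist_real_def)
    qed
    then have "N - e \<le> Inf (range (\<lambda>k. overlap psi (run B w (r' k))))"
      by (intro cInf_greatest) auto
    also have "\<dots> \<le> fND B w" by (rule fND_ge[OF B wB psiF pu r'])
    finally show ?thesis .
  qed
  have "N \<le> fND B w"
  proof (rule ccontr)
    assume "\<not> N \<le> fND B w"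
    then have "(N - fND B w) / 2 > 0" by simp
    from main[OF this] show False using \<open>\<not> N \<le> fND B w\<close> by argo
  qed
  moreover have "p * t + (1 - p) \<le> N" using tz p unfolding N_def q_def by simp
  ultimately show ?thesis unfolding t_def B_def by simp
qed

lemma cs2: "(cmod (al * x + be * y))^2 \<le> ((cmod al)^2 + (cmod be)^2) * ((cmod x)^2 + (cmod y)^2)"
proof -
  define A where "A = cmod al"
  define B where "B = cmod x"
  define C where "C = cmod be"
  define D where "D = cmod y"
  have "cmod (al * x + be * y) \<le> A * B + C * D"
    unfolding A_def B_def C_def D_def by (metis norm_mult norm_triangle_ineq)
  then have "(cmod (al * x + be * y))^2 \<le> (A * B + C * D)^2" by (intro power_mono) auto
  also have "\<dots> = (A^2 + C^2) * (B^2 + D^2) - (A * D - C * B)^2" by (simp add: power2_eq_square algebra_simps)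
  also have "\<dots> \<le> (A^2 + C^2) * (B^2 + D^2)" by simp
  finally show ?thesis unfolding A_def B_def C_def D_def .
qed

lemma inf_affine_le:
  fixes f g :: "nat \<Rightarrow> real"
  assumes "p > 0" "\<And>i. f i \<le> p * g i + q" "\<And>i. 0 \<le> g i" "\<And>i. 0 \<le> f i"
  shows "Inf (range f) \<le> p * Inf (range g) + q"
proof -
  have bdd: "bdd_below (range f)" using assms by (intro bdd_belowI[of _ 0]) auto
  have "(Inf (range f) - q) / p \<le> g i" for i
  proof -
    have "Inf (range f) \<le> f i" by (rule cInf_lower[OF _ bdd]) auto
    then have "Inf (range f) - q \<le> p * g i" using assms(2)[of i] by linarith
    then show ?thesis using assms(1) by (simp add: field_simps)
  qed
  then have "(Inf (range f) - q) / p \<le> Inf (range g)" by (intro cInf_greatest) auto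
  then show ?thesis using assms(1) by (simp add: field_simps)
qed

lemma shift_upper:
  assumes A: "wf_qa A" and w: "is_word (qalph A) w" and p: "0 < p" "p < 1"
  shows "fND (mkB A p True) w \<le> p * fND A w + (1 - p)"
proof -
  define B where "B = mkB A p True"
  define d where "d = qdim A"
  define q where "q = 1 - p"
  have q: "q > 0" using p by (simp add: q_def)
  have B: "wf_qa B" unfolding B_def by (rule wf_mkB[OF A]) (use p in auto)
  have wB: "is_word (qalph B) w" using w by (simp add: B_def)
  define a where "a = complex_of_real (sqrt p)"
  define b where "b = complex_of_real (sqrt q)"
  have ca: "(cmod a)^2 = p" "(cmod b)^2 = q" using p q by (simp_all add: a_def b_def)
  have sub: "is_subspace d (qF A)" using A by (simp add: wf_qa_def d_def)
  have c0: "0 \<le> p * fND A w + q" using fND_bounds[OF A w] p q by simp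
  have "fND B w \<le> p * fND A w + q"
  proof (rule fND_leI[OF _ c0])
    fix psi and r :: "nat \<Rightarrow> nat" assume ps: "psi \<in> qF B" "unit_vec psi" "strict_mono r"
    have pc: "psi \<in> carrier_vec (Suc d)" "restr d psi \<in> qF A" using ps(1) by (auto simp: B_def d_def)
    define u where "u = restr d psi"
    define be where "be = psi $ d"
    define nu where "nu = (\<Sum>i<d. (cmod (u$i))^2)"
    have nu0: "nu \<ge> 0" by (simp add: nu_def sum_nonneg)
    have uc: "u \<in> carrier_vec d" by (simp add: u_def)
    have "complex_of_real 1 = psi \<bullet>c psi" using ps(2) by (simp add: unit_vec_def)
    also have "\<dots> = complex_of_real nu + be * cnj be"
      using self_split[OF pc(1)] cprod_self[OF uc] by (simp add: u_def be_def nu_def)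
    also have "be * cnj be = complex_of_real ((cmod be)^2)" using complex_norm_square[of be] by simp
    finally have "complex_of_real (nu + (cmod be)^2) = complex_of_real 1" unfolding of_real_add by (rule sym)
    then have nb: "nu + (cmod be)^2 = 1" by (simp only: of_real_eq_iff)
    have ovB: "overlap psi (run B w n) = (cmod (a * (run A w n \<bullet>c u) + b * cnj be))^2" for n
      using ov_mkB[OF A w ps(1)[unfolded B_def], of n] by (simp add: B_def a_def b_def q_def u_def be_def d_def)
    have bndB: "0 \<le> overlap psi (run B w n)" for n using ov_bnds_B[OF B wB ps(1,2)] by auto
    show "Inf (range (\<lambda>i. overlap psi (run B w (r i)))) \<le> p * fND A w + q"
    proof (cases "nu = 0")
      case True
      then have "\<forall>i\<in>{..<d}. (cmod (u$i))^2 = 0" unfolding nu_def by (subst sum_nonneg_eq_0_iff[symmetric]) auto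
      then have "u$i = 0" if "i < d" for i using that by auto
      then have "run A w n \<bullet>c u = 0" for n using uc by (simp add: cprod_sum[of _ d])
      then have "overlap psi (run B w n) = q * (cmod be)^2" for n
        unfolding ovB using ca by (simp add: norm_mult power_mult_distrib)
      then have "overlap psi (run B w n) \<le> q" for n using nb True q by simp
      moreover have "Inf (range (\<lambda>i. overlap psi (run B w (r i)))) \<le> overlap psi (run B w (r 0))"
        by (rule inf_bounds(3)) (use ov_bnds_B[OF B wB ps(1,2)] in auto)
      ultimately show ?thesis using c0 fND_bounds[OF A w] p by (smt (verit) mult_nonneg_nonneg)
    next
      case False
      then have nup: "nu > 0" using nu0 by simp
      define phi where "phi = complex_of_real (1 / sqrt nu) \<cdot>\<^sub>v u"
      have phc: "phi \<in> carrier_vec d" using uc by (simp add: phi_def)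
      have phF: "phi \<in> qF A" using sub pc(2) unfolding is_subspace_def phi_def u_def by auto
      have "phi \<bullet>c phi = complex_of_real (1 / sqrt nu) * complex_of_real (1 / sqrt nu) * complex_of_real nu"
        using uc cprod_self[OF uc] by (simp add: phi_def cprod_smult_left[of _ d] cprod_smult_right[of _ d] nu_def)
      also have "\<dots> = 1" using nup by (simp flip: of_real_mult)
      finally have phu: "unit_vec phi" by (simp add: unit_vec_def)
      have sx: "run A w n \<bullet>c u = complex_of_real (sqrt nu) * (run A w n \<bullet>c phi)" for n
        using uc nup by (simp add: phi_def cprod_smult_right[of _ d])
      have le: "overlap psi (run B w n) \<le> p * overlap phi (run A w n) + q" for n
      proof -
        have "overlap psi (run B w n) = (cmod (complex_of_real (sqrt nu) * (a * (run A w n \<bullet>c phi)) + cnj be * b))^2"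
          unfolding ovB sx by (simp add: mult_ac)
        also have "\<dots> \<le> ((cmod (complex_of_real (sqrt nu)))^2 + (cmod (cnj be))^2) * ((cmod (a * (run A w n \<bullet>c phi)))^2 + (cmod b)^2)"
          by (rule cs2)
        also have "\<dots> = p * overlap phi (run A w n) + q"
          using nb nu0 ca by (simp add: overlap_def norm_mult power_mult_distrib)
        finally show ?thesis .
      qed
      have obA: "0 \<le> overlap phi (run A w n)" for n by (simp add: overlap_def)
      have "Inf (range (\<lambda>i. overlap psi (run B w (r i)))) \<le> p * Inf (range (\<lambda>i. overlap phi (run A w (r i)))) + q"
        by (rule inf_affine_le[OF p(1)]) (auto intro: le obA bndB)
      also have "\<dots> \<le> p * fND A w + q"
        using fND_ge[OF A w phF phu ps(3)] p by simp
      finally show ?thesis .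
    qed
  qed
  then show ?thesis unfolding B_def q_def .
qed

lemma shift_zero:
  assumes A: "wf_qa A" and w: "is_word (qalph A) w" and p: "0 < p" "p < 1"
  shows "1 - p \<le> fND (mkB A p True) w"
proof -
  define B where "B = mkB A p True"
  define d where "d = qdim A"
  have B: "wf_qa B" unfolding B_def by (rule wf_mkB[OF A]) (use p in auto)
  have wB: "is_word (qalph B) w" using w by (simp add: B_def)
  define psi where "psi = vec (Suc d) (\<lambda>i. if i < d then 0 else (1::complex))"
  have psic: "psi \<in> carrier_vec (Suc d)" by (simp add: psi_def)
  have r0: "restr d psi = 0\<^sub>v d" by (auto simp: psi_def restr_def)
  have "0\<^sub>v d \<in> qF A" using A by (simp add: wf_qa_def is_subspace_def d_def)
  then have psiF: "psi \<in> qF B" using psic r0 by (simp add: B_def d_def)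
  have "psi \<bullet>c psi = 1" using self_split[OF psic] r0 by (simp add: psi_def cprod_sum[of _ d])
  then have pu: "unit_vec psi" by (simp add: unit_vec_def)
  have "overlap psi (run B w n) = 1 - p" for n
    using ov_mkB[OF A w psiF[unfolded B_def], of n] r0 p by (simp add: B_def d_def cprod_sum[of _ d] psi_def)
  then have "Inf (range (\<lambda>i. overlap psi (run B w (id i)))) = 1 - p" by simp
  moreover have "Inf (range (\<lambda>i. overlap psi (run B w (id i)))) \<le> fND B w"
    by (rule fND_ge[OF B wB psiF pu]) (simp add: strict_mono_def)
  ultimately show ?thesis unfolding B_def by simp
qed

lemma fND_shift:
  assumes A: "wf_qa A" and w: "is_word (qalph A) w" and p: "0 < p" "p < 1"
  shows "fND (mkB A p True) w = p * fND A w + (1 - p)"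
proof (rule antisym[OF shift_upper[OF assms]])
  have "fND A w \<le> (fND (mkB A p True) w - (1 - p)) / p"
    unfolding fND_Sset[of A w]
  proof (rule cSup_least)
    show "insert 0 (Sset A w) \<noteq> {}" by simp
  next
    fix x assume "x \<in> insert 0 (Sset A w)"
    then show "x \<le> (fND (mkB A p True) w - (1 - p)) / p"
    proof
      assume "x = 0" then show ?thesis using shift_zero[OF assms] p by simp
    next
      assume "x \<in> Sset A w"
      then obtain phi and r :: "nat \<Rightarrow> nat" where x: "x = Inf (range (\<lambda>i::nat. overlap phi (run A w (r i))))"
        and ph: "phi \<in> qF A" "unit_vec phi" "strict_mono r" unfolding Sset_def by auto
      have "p * x + (1 - p) \<le> fND (mkB A p True) w"
        unfolding x by (rule shift_lower[OF A w p ph])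
      then show ?thesis using p by (simp add: field_simps)
    qed
  qed
  then show "p * fND A w + (1 - p) \<le> fND (mkB A p True) w" using p by (simp add: field_simps)
qed

lemma class_sub:
  assumes "\<And>A. wf_qa A \<Longrightarrow> \<exists>B. wf_qa B \<and> qalph B = qalph A \<and>
     (\<forall>w. is_word (qalph A) w \<longrightarrow> (Qr (fND B w) \<longleftrightarrow> Pr (fND A w)))"
  shows "QBA_class Pr \<subseteq> QBA_class Qr"
proof
  fix L assume "L \<in> QBA_class Pr"
  then obtain A where A: "wf_qa A" and L: "L = lang Pr A" unfolding QBA_class_def by blast
  obtain B where B: "wf_qa B" "qalph B = qalph A"
    and e: "\<forall>w. is_word (qalph A) w \<longrightarrow> (Qr (fND B w) \<longleftrightarrow> Pr (fND A w))" using assms[OF A] by blast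
  have eqL: "lang Pr A = lang Qr B" unfolding lang_def using B(2) e by auto
  show "L \<in> QBA_class Qr" unfolding QBA_class_def L eqL using B(1) by (intro CollectI exI[of _ B]) simp
qed

lemma scaled_B:
  assumes "wf_qa A" "0 < p" "p \<le> 1"
  shows "wf_qa (mkB A p False) \<and> qalph (mkB A p False) = qalph A \<and>
    (\<forall>w. is_word (qalph A) w \<longrightarrow> fND (mkB A p False) w = p * fND A w)"
  using assms wf_mkB[of A p False] fND_scaled[of A _ p] by auto

lemma shifted_B:
  assumes "wf_qa A" "0 < p" "p < 1"
  shows "wf_qa (mkB A p True) \<and> qalph (mkB A p True) = qalph A \<and>
    (\<forall>w. is_word (qalph A) w \<longrightarrow> fND (mkB A p True) w = p * fND A w + (1 - p))"
  using assms wf_mkB[of A p True] fND_shift[of A _ p] by auto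

lemma gt_sub:
  assumes "0 < m" "m < 1" "0 < l" "l < 1"
  shows "QBA_class (\<lambda>x. x > m) \<subseteq> QBA_class (\<lambda>x. x > l)"
proof (rule class_sub)
  fix A assume A: "wf_qa A"
  show "\<exists>B. wf_qa B \<and> qalph B = qalph A \<and> (\<forall>w. is_word (qalph A) w \<longrightarrow> (fND B w > l \<longleftrightarrow> fND A w > m))"
  proof (cases "l \<le> m")
    case True
    define p where "p = l / m"
    have p: "0 < p" "p \<le> 1" using assms True by (auto simp: p_def field_simps)
    have "p * f > l \<longleftrightarrow> f > m" for f using assms by (simp add: p_def field_simps)
    then show ?thesis using scaled_B[OF A p] by (intro exI[of _ "mkB A p False"]) auto
  next
    case False
    define p where "p = (1 - l) / (1 - m)"
    have p: "0 < p" "p < 1" using assms False by (auto simp: p_def field_simps)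
    have "p * f + (1 - p) > l \<longleftrightarrow> f > m" for f
    proof -
      have h0: "p * (1 - m) = 1 - l" using assms by (simp add: p_def)
      have h: "1 - l = p - p * m" using h0 by (simp add: algebra_simps)
      have "p * f + (1 - p) - l = p * f - p * m" using h by linarith
      also have "\<dots> = p * (f - m)" by (simp add: algebra_simps)
      finally have eq: "p * f + (1 - p) - l = p * (f - m)" .
      have "l < p * f + (1 - p) \<longleftrightarrow> 0 < p * f + (1 - p) - l" by simp
      also have "\<dots> \<longleftrightarrow> 0 < p * (f - m)" unfolding eq ..
      also have "\<dots> \<longleftrightarrow> m < f" using p by (simp add: zero_less_mult_iff)
      finally show ?thesis .
    qed
    then show ?thesis using shifted_B[OF A p] by (intro exI[of _ "mkB A p True"]) auto
  qed
qed

lemma ge_sub: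
  assumes "0 < m" "m < 1" "0 < l" "l < 1"
  shows "QBA_class (\<lambda>x. x \<ge> m) \<subseteq> QBA_class (\<lambda>x. x \<ge> l)"
proof (rule class_sub)
  fix A assume A: "wf_qa A"
  show "\<exists>B. wf_qa B \<and> qalph B = qalph A \<and> (\<forall>w. is_word (qalph A) w \<longrightarrow> (fND B w \<ge> l \<longleftrightarrow> fND A w \<ge> m))"
  proof (cases "l \<le> m")
    case True
    define p where "p = l / m"
    have p: "0 < p" "p \<le> 1" using assms True by (auto simp: p_def field_simps)
    have "p * f \<ge> l \<longleftrightarrow> f \<ge> m" for f using assms by (simp add: p_def field_simps)
    then show ?thesis using scaled_B[OF A p] by (intro exI[of _ "mkB A p False"]) auto
  next
    case False
    define p where "p = (1 - l) / (1 - m)"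
    have p: "0 < p" "p < 1" using assms False by (auto simp: p_def field_simps)
    have "p * f + (1 - p) \<ge> l \<longleftrightarrow> f \<ge> m" for f
    proof -
      have h0: "p * (1 - m) = 1 - l" using assms by (simp add: p_def)
      have h: "1 - l = p - p * m" using h0 by (simp add: algebra_simps)
      have "p * f + (1 - p) - l = p * f - p * m" using h by linarith
      also have "\<dots> = p * (f - m)" by (simp add: algebra_simps)
      finally have eq: "p * f + (1 - p) - l = p * (f - m)" .
      have "l \<le> p * f + (1 - p) \<longleftrightarrow> 0 \<le> p * f + (1 - p) - l" by simp
      also have "\<dots> \<longleftrightarrow> 0 \<le> p * (f - m)" unfolding eq ..
      also have "\<dots> \<longleftrightarrow> m \<le> f" using p by (simp add: zero_le_mult_iff)
      finally show ?thesis .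
    qed
    then show ?thesis using shifted_B[OF A p] by (intro exI[of _ "mkB A p True"]) auto
  qed
qed

lemma pos_sub:
  assumes "0 < m" "m < 1"
  shows "QBA_class (\<lambda>x. x > 0) \<subseteq> QBA_class (\<lambda>x. x > m)"
proof (rule class_sub)
  fix A assume A: "wf_qa A"
  define p where "p = 1 - m"
  have p: "0 < p" "p < 1" using assms by (auto simp: p_def)
  have "p * f + (1 - p) > m \<longleftrightarrow> f > 0" for f using p by (simp add: p_def zero_less_mult_iff)
  then show "\<exists>B. wf_qa B \<and> qalph B = qalph A \<and> (\<forall>w. is_word (qalph A) w \<longrightarrow> (fND B w > m \<longleftrightarrow> fND A w > 0))"
    using shifted_B[OF A p] by (intro exI[of _ "mkB A p True"]) auto
qed

lemma one_sub:
  assumes "0 < m" "m < 1"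
  shows "QBA_class (\<lambda>x. x = 1) \<subseteq> QBA_class (\<lambda>x. x \<ge> m)"
proof (rule class_sub)
  fix A assume A: "wf_qa A"
  have p: "0 < m" "m \<le> 1" using assms by auto
  have "\<forall>w. is_word (qalph A) w \<longrightarrow> (m * fND A w \<ge> m \<longleftrightarrow> fND A w = 1)"
    using fND_bounds[OF A] assms by (auto simp: antisym)
  then show "\<exists>B. wf_qa B \<and> qalph B = qalph A \<and> (\<forall>w. is_word (qalph A) w \<longrightarrow> (fND B w \<ge> m \<longleftrightarrow> fND A w = 1))"
    using scaled_B[OF A p] by (intro exI[of _ "mkB A m False"]) auto
qed

theorem theorem5:
  shows "(\<forall>\<mu> l::real. 0 < \<mu> \<and> \<mu> < 1 \<and> 0 < l \<and> l < 1 \<longrightarrow>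
            QBA_class (\<lambda>x. x > 0) \<subseteq> QBA_class (\<lambda>x. x > \<mu>)
          \<and> QBA_class (\<lambda>x. x > \<mu>) = QBA_class (\<lambda>x. x > l))
       \<and> (\<forall>\<mu> l::real. 0 < \<mu> \<and> \<mu> < 1 \<and> 0 < l \<and> l < 1 \<longrightarrow>
            QBA_class (\<lambda>x. x = 1) \<subseteq> QBA_class (\<lambda>x. x \<ge> \<mu>)
          \<and> QBA_class (\<lambda>x. x \<ge> \<mu>) = QBA_class (\<lambda>x. x \<ge> l))
       \<and> (\<forall>l::real. 0 \<le> l \<and> l < 1 \<longrightarrow>
            \<not> QBA_class (\<lambda>x. x = 1) \<subseteq> QBA_class (\<lambda>x. x > l))"
proof (intro conjI allI impI)
  fix m l :: real assume a: "0 < m \<and> m < 1 \<and> 0 < l \<and> l < 1"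
  show "QBA_class (\<lambda>x. x > 0) \<subseteq> QBA_class (\<lambda>x. x > m)" using a by (intro pos_sub) auto
  show "QBA_class (\<lambda>x. x > m) = QBA_class (\<lambda>x. x > l)" using a by (intro subset_antisym gt_sub) auto
next
  fix m l :: real assume a: "0 < m \<and> m < 1 \<and> 0 < l \<and> l < 1"
  show "QBA_class (\<lambda>x. x = 1) \<subseteq> QBA_class (\<lambda>x. x \<ge> m)" using a by (intro one_sub) auto
  show "QBA_class (\<lambda>x. x \<ge> m) = QBA_class (\<lambda>x. x \<ge> l)" using a by (intro subset_antisym ge_sub) auto
next
  fix l :: real assume a: "0 \<le> l \<and> l < 1"
  show "\<not> QBA_class (\<lambda>x. x = 1) \<subseteq> QBA_class (\<lambda>x. x > l)" using a by (intro part3) auto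
qed

end
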